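(* Let $p,q>1$ be real numbers with $\frac1p+\frac1q=1$, let $n\ge1$ and let $a_1,\dots,a_n,b_1,\dots,b_n>0$. Put $S_a=\sum_{j=1}^n a_j^p$, $S_b=\sum_{j=1}^n b_j^q$, $$A=\frac{1}{2pq}S_a^{1/p}S_b^{1/q}\sum_{i=1}^n \left(\frac{a_i^p}{S_a}-\frac{b_i^q}{S_b}\right)^2,$$ $$m=\min_{1\le i\le n}\min\left\{\frac{a_i^p}{S_a},\ \frac{b_i^q}{S_b}\right\},\qquad M=\max_{1\le i\le n}\max\left\{\frac{a_i^p}{S_a},\ \frac{b_i^q}{S_b}\right\}.$$ Then $$\frac{A}{M}\leq S_a^{1/p}S_b^{1/q}-\sum_{i=1}^n a_ib_i\leq\frac{A}{m}.$$ *)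

theory Defs
  imports Complex_Main
begin

end

theory Submission
  imports Defs
begin

lemma mono_from1:
  fixes f f' :: "real \<Rightarrow> real"
  assumes "t \<ge> 1" "f 1 = 0"
    and "\<And>s. s \<ge> 1 \<Longrightarrow> (f has_real_derivative f' s) (at s)"
    and "\<And>s. s \<ge> 1 \<Longrightarrow> f' s \<ge> 0"
  shows "f t \<ge> 0"
proof -
  have "f 1 \<le> f t"
    by (rule DERIV_nonneg_imp_nondecreasing[OF assms(1)]) (use assms in auto)
  thus ?thesis using assms by simp
qed

lemma powr_le1: fixes s e :: real assumes "s \<ge> 1" "e \<le> 0" shows "s powr e \<le> 1"
  using powr_mono[OF assms(2) assms(1)] assms by simp

lemma upper1:
  fixes l t :: real assumes l: "0 < l" "l < 1" and t: "t \<ge> 1"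
  shows "l * t + (1 - l) - t powr l \<le> l * (1 - l) * (t - 1)^2 / 2"
proof -
  define k' where "k' s = l*(1-l)*(s-1) - l + l * s powr (l-1)" for s :: real
  have k'pos: "k' s \<ge> 0" if "s \<ge> 1" for s
  proof (rule mono_from1[where f=k' and f'="\<lambda>s. l*(1-l) - l*(1-l) * s powr (l-2)"])
    show "s \<ge> 1" by fact
    show "k' 1 = 0" by (simp add: k'_def)
    fix s :: real assume s: "s \<ge> 1"
    show "(k' has_real_derivative l*(1-l) - l*(1-l) * s powr (l-2)) (at s)"
      unfolding k'_def using s
      by (auto intro!: derivative_eq_intros simp: algebra_simps)
    have "s powr (l-2) \<le> 1" using s l by (intro powr_le1) auto
    hence "0 \<le> (l*(1-l)) * (1 - s powr (l-2))" using l by (intro mult_nonneg_nonneg) auto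
    thus "l*(1-l) - l*(1-l) * s powr (l-2) \<ge> 0" by (simp add: algebra_simps)
  qed
  define k where "k s = l*(1-l)*(s-1)^2/2 - (l*s + (1-l) - s powr l)" for s :: real
  have "k t \<ge> 0"
  proof (rule mono_from1[where f=k and f'=k'])
    show "t \<ge> 1" by fact
    show "k 1 = 0" by (simp add: k_def)
    fix s :: real assume s: "s \<ge> 1"
    show "(k has_real_derivative k' s) (at s)"
      unfolding k_def k'_def using s
      by (auto intro!: derivative_eq_intros simp: field_simps power2_eq_square)
    show "k' s \<ge> 0" using k'pos s .
  qed
  thus ?thesis by (simp add: k_def)
qed

lemma lower1:
  fixes l t :: real assumes l: "0 < l" "l < 1" and t: "t \<ge> 1"
  shows "l * (1 - l) * (t - 1)^2 / (2 * t) \<le> l * t + (1 - l) - t powr l"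
proof -
  have e1: "s * s powr (l-2) = s powr (l-1)" if "s \<ge> 1" for s :: real
    using powr_add[of s 1 "l-2"] that by simp
  have e2: "s * s powr (l-1) = s powr l" if "s \<ge> 1" for s :: real
    using powr_add[of s 1 "l-1"] that by simp
  define N2 where "N2 s = 2*l - l*(1+l) * s powr (l-1) - l*(1-l)" for s :: real
  have N2pos: "N2 s \<ge> 0" if "s \<ge> 1" for s
  proof (rule mono_from1[where f=N2 and f'="\<lambda>s. l*(1+l)*(1-l) * s powr (l-2)"])
    show "s \<ge> 1" by fact
    show "N2 1 = 0" by (simp add: N2_def algebra_simps)
    fix s :: real assume s: "s \<ge> 1"
    show "(N2 has_real_derivative l*(1+l)*(1-l) * s powr (l-2)) (at s)"
      unfolding N2_def using s
      by (auto intro!: derivative_eq_intros simp: field_simps)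
    show "l*(1+l)*(1-l) * s powr (l-2) \<ge> 0" using l by simp
  qed
  define N1 where "N1 s = (l*s + (1-l) - s powr l) + s*(l - l * s powr (l-1)) - l*(1-l)*(s-1)" for s :: real
  have N1pos: "N1 s \<ge> 0" if "s \<ge> 1" for s
  proof (rule mono_from1[where f=N1 and f'=N2])
    show "s \<ge> 1" by fact
    show "N1 1 = 0" by (simp add: N1_def algebra_simps)
    fix s :: real assume s: "s \<ge> 1"
    show "(N1 has_real_derivative N2 s) (at s)"
      unfolding N1_def N2_def using s
      by (auto intro!: derivative_eq_intros simp: field_simps e1 e2)
    show "N2 s \<ge> 0" using N2pos s .
  qed
  define N where "N s = s*(l*s + (1-l) - s powr l) - l*(1-l)*(s-1)^2/2" for s :: real
  have "N t \<ge> 0"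
  proof (rule mono_from1[where f=N and f'=N1])
    show "t \<ge> 1" by fact
    show "N 1 = 0" by (simp add: N_def)
    fix s :: real assume s: "s \<ge> 1"
    show "(N has_real_derivative N1 s) (at s)"
      unfolding N_def N1_def using s
      by (auto intro!: derivative_eq_intros simp: field_simps e1 e2 power2_eq_square)
    show "N1 s \<ge> 0" using N1pos s .
  qed
  hence "l*(1-l)*(t-1)^2/2 \<le> t*(l*t + (1-l) - t powr l)" by (simp add: N_def)
  thus ?thesis using t by (simp add: field_simps)
qed

lemma two1:
  fixes l x y :: real assumes l: "0 < l" "l < 1" and xy: "0 < y" "y \<le> x"
  shows "l*(1-l)*(x-y)^2/(2*x) \<le> l*x + (1-l)*y - x powr l * y powr (1-l)
       \<and> l*x + (1-l)*y - x powr l * y powr (1-l) \<le> l*(1-l)*(x-y)^2/(2*y)"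
proof -
  define t where "t = x / y"
  have t1: "t \<ge> 1" using xy by (simp add: t_def)
  have x: "x = y * t" using xy by (simp add: t_def)
  have g: "x powr l * y powr (1-l) = y * t powr l"
    using xy by (simp add: x powr_mult powr_diff)
  have u: "l * t + (1 - l) - t powr l \<le> l * (1 - l) * (t - 1)^2 / 2" by (rule upper1[OF l t1])
  have lo: "l * (1 - l) * (t - 1)^2 / (2 * t) \<le> l * t + (1 - l) - t powr l" by (rule lower1[OF l t1])
  have i1: "y * (l * t + (1 - l) - t powr l) \<le> y * (l * (1 - l) * (t - 1)^2 / 2)"
    using u xy by (intro mult_left_mono) auto
  have i2: "y * (l * (1 - l) * (t - 1)^2 / (2 * t)) \<le> y * (l * t + (1 - l) - t powr l)"
    using lo xy by (intro mult_left_mono) auto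
  have e1: "y * (l * (1 - l) * (t - 1)^2 / 2) = l*(1-l)*(x-y)^2/(2*y)"
    using xy by (simp add: x field_simps power2_eq_square)
  have e2: "y * (l * (1 - l) * (t - 1)^2 / (2 * t)) = l*(1-l)*(x-y)^2/(2*x)"
    using xy t1 by (simp add: x field_simps power2_eq_square)
  have e3: "y * (l * t + (1 - l) - t powr l) = l*x + (1-l)*y - x powr l * y powr (1-l)"
    using g by (simp add: x algebra_simps)
  show ?thesis using i1 i2 unfolding e1 e2 e3 by linarith
qed

lemma two2:
  fixes l x y mm MM :: real assumes l: "0 < l" "l < 1" and xy: "0 < mm" "mm \<le> x" "mm \<le> y" "x \<le> MM" "y \<le> MM"
  shows "l*(1-l)*(x-y)^2/(2*MM) \<le> l*x + (1-l)*y - x powr l * y powr (1-l)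
       \<and> l*x + (1-l)*y - x powr l * y powr (1-l) \<le> l*(1-l)*(x-y)^2/(2*mm)"
proof (cases "y \<le> x")
  case True
  have A: "l*(1-l)*(x-y)^2/(2*MM) \<le> l*(1-l)*(x-y)^2/(2*x)"
    using xy l by (intro divide_left_mono mult_nonneg_nonneg) auto
  have B: "l*(1-l)*(x-y)^2/(2*y) \<le> l*(1-l)*(x-y)^2/(2*mm)"
    using xy l by (intro divide_left_mono mult_nonneg_nonneg) auto
  show ?thesis using two1[OF l _ True] A B xy by linarith
next
  case False
  have l': "0 < 1 - l" "1 - l < 1" using l by auto
  from two1[OF l', of x y] False xy
  have T: "(1-l)*(1-(1-l))*(y-x)^2/(2*y) \<le> (1-l)*y + (1-(1-l))*x - y powr (1-l) * x powr (1-(1-l))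
       \<and> (1-l)*y + (1-(1-l))*x - y powr (1-l) * x powr (1-(1-l)) \<le> (1-l)*(1-(1-l))*(y-x)^2/(2*x)" by auto
  have A: "l*(1-l)*(x-y)^2/(2*MM) \<le> l*(1-l)*(x-y)^2/(2*y)"
    using xy l by (intro divide_left_mono mult_nonneg_nonneg) auto
  have B: "l*(1-l)*(x-y)^2/(2*x) \<le> l*(1-l)*(x-y)^2/(2*mm)"
    using xy l by (intro divide_left_mono mult_nonneg_nonneg) auto
  have sq: "(y-x)^2 = (x-y)^2" by (simp add: power2_commute)
  show ?thesis using T A B unfolding sq by (simp add: algebra_simps)
qed

theorem mainTheorem3:
  fixes p q :: real and n :: nat and a b :: "nat \<Rightarrow> real"
  assumes "p > 1" and "q > 1" and "1 / p + 1 / q = 1"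
    and "n \<ge> 1"
    and "\<And>i. i \<in> {1..n} \<Longrightarrow> a i > 0"
    and "\<And>i. i \<in> {1..n} \<Longrightarrow> b i > 0"
  defines "Sa \<equiv> (\<Sum>j=1..n. a j powr p)"
    and "Sb \<equiv> (\<Sum>j=1..n. b j powr q)"
  defines "A \<equiv> 1 / (2 * p * q) * Sa powr (1 / p) * Sb powr (1 / q)
                  * (\<Sum>i=1..n. (a i powr p / Sa - b i powr q / Sb)\<^sup>2)"
    and "m \<equiv> Min ((\<lambda>i. min (a i powr p / Sa) (b i powr q / Sb)) ` {1..n})"
    and "M \<equiv> Max ((\<lambda>i. max (a i powr p / Sa) (b i powr q / Sb)) ` {1..n})"
  shows "A / M \<le> Sa powr (1 / p) * Sb powr (1 / q) - (\<Sum>i=1..n. a i * b i)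
       \<and> Sa powr (1 / p) * Sb powr (1 / q) - (\<Sum>i=1..n. a i * b i) \<le> A / m"
proof -
  define l where "l = 1 / p"
  have l: "0 < l" "l < 1" using assms(1) by (auto simp: l_def)
  have q1: "1 / q = 1 - l" using assms(3) by (simp add: l_def)
  have pq0: "1 / (2 * p * q) = (1/p) * (1/q) / 2" by simp
  have pq: "1 / (2 * p * q) = l * (1 - l) / 2" unfolding pq0 q1 l_def ..
  have apos: "a i > 0" if "i \<in> {1..n}" for i using assms(5) that .
  have bpos: "b i > 0" if "i \<in> {1..n}" for i using assms(6) that .
  have ne: "{1..n} \<noteq> {}" using assms(4) by auto
  have Sa: "Sa > 0" unfolding Sa_def proof (intro sum_pos)
    fix i assume "i \<in> {1..n}" thus "0 < a i powr p" using apos[of i] by simp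
  qed (use ne in auto)
  have Sb: "Sb > 0" unfolding Sb_def proof (intro sum_pos)
    fix i assume "i \<in> {1..n}" thus "0 < b i powr q" using bpos[of i] by simp
  qed (use ne in auto)
  define x where "x i = a i powr p / Sa" for i
  define y where "y i = b i powr q / Sb" for i
  define P where "P = Sa powr l * Sb powr (1 - l)"
  have P: "P > 0" using Sa Sb by (simp add: P_def)
  have xpos: "x i > 0" if "i \<in> {1..n}" for i using apos[OF that] Sa by (simp add: x_def)
  have ypos: "y i > 0" if "i \<in> {1..n}" for i using bpos[OF that] Sb by (simp add: y_def)
  have mdef: "m = Min ((\<lambda>i. min (x i) (y i)) ` {1..n})" by (simp add: m_def x_def y_def)
  have Mdef: "M = Max ((\<lambda>i. max (x i) (y i)) ` {1..n})" by (simp add: M_def x_def y_def)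
  have mpos: "m > 0" unfolding mdef using ne xpos ypos by (subst Min_gr_iff) auto
  have mle: "m \<le> x i \<and> m \<le> y i" if "i \<in> {1..n}" for i
  proof -
    have "m \<le> min (x i) (y i)" unfolding mdef using that by (intro Min_le) auto
    thus ?thesis by simp
  qed
  have Mge: "x i \<le> M \<and> y i \<le> M" if "i \<in> {1..n}" for i
  proof -
    have "max (x i) (y i) \<le> M" unfolding Mdef using that by (intro Max_ge) auto
    thus ?thesis by simp
  qed
  have prod: "x i powr l * y i powr (1 - l) = a i * b i / P" if "i \<in> {1..n}" for i
  proof -
    have "x i powr l = a i / Sa powr l"
      using apos[OF that] Sa assms(1) by (simp add: x_def powr_divide powr_powr l_def)
    moreover have "y i powr (1 - l) = b i / Sb powr (1 - l)"
      using bpos[OF that] Sb assms(2) by (simp add: y_def powr_divide powr_powr q1[symmetric])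
    ultimately show ?thesis by (simp add: P_def)
  qed
  define D where "D = (\<Sum>i=1..n. (x i - y i)^2)"
  have sx: "(\<Sum>i=1..n. x i) = 1" using Sa by (simp add: x_def Sa_def sum_divide_distrib[symmetric])
  have sy: "(\<Sum>i=1..n. y i) = 1" using Sb by (simp add: y_def Sb_def sum_divide_distrib[symmetric])
  have gsum: "(\<Sum>i=1..n. l * x i + (1 - l) * y i - x i powr l * y i powr (1 - l))
      = 1 - (\<Sum>i=1..n. a i * b i) / P"
  proof -
    have "(\<Sum>i=1..n. l * x i + (1 - l) * y i - x i powr l * y i powr (1 - l))
        = (\<Sum>i=1..n. l * x i + (1 - l) * y i - a i * b i / P)"
      by (rule sum.cong) (auto simp: prod)
    also have "\<dots> = l * (\<Sum>i=1..n. x i) + (1 - l) * (\<Sum>i=1..n. y i) - (\<Sum>i=1..n. a i * b i) / P"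
      by (simp add: sum.distrib sum_subtractf sum_distrib_left sum_divide_distrib)
    finally show ?thesis using sx sy by simp
  qed
  have lowS: "(\<Sum>i=1..n. l*(1-l)*(x i - y i)^2/(2*M)) \<le> (\<Sum>i=1..n. l * x i + (1 - l) * y i - x i powr l * y i powr (1 - l))"
    by (rule sum_mono) (use two2[OF l] mpos mle Mge in blast)
  have upS: "(\<Sum>i=1..n. l * x i + (1 - l) * y i - x i powr l * y i powr (1 - l)) \<le> (\<Sum>i=1..n. l*(1-l)*(x i - y i)^2/(2*m))"
    by (rule sum_mono) (use two2[OF l] mpos mle Mge in blast)
  have e1: "(\<Sum>i=1..n. l*(1-l)*(x i - y i)^2/(2*M)) = l*(1-l)*D/(2*M)"
    by (simp add: D_def sum_distrib_left sum_divide_distrib)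
  have e2: "(\<Sum>i=1..n. l*(1-l)*(x i - y i)^2/(2*m)) = l*(1-l)*D/(2*m)"
    by (simp add: D_def sum_distrib_left sum_divide_distrib)
  have AD: "A = P * (l*(1-l)*D/2)"
    unfolding A_def pq P_def q1 D_def x_def y_def l_def by simp
  have main1: "l*(1-l)*D/(2*M) \<le> 1 - (\<Sum>i=1..n. a i * b i) / P" using lowS e1 gsum by simp
  have main2: "1 - (\<Sum>i=1..n. a i * b i) / P \<le> l*(1-l)*D/(2*m)" using upS e2 gsum by simp
  have r1: "P * (l*(1-l)*D/(2*M)) \<le> P * (1 - (\<Sum>i=1..n. a i * b i) / P)"
    using main1 P by (intro mult_left_mono) auto
  have r2: "P * (1 - (\<Sum>i=1..n. a i * b i) / P) \<le> P * (l*(1-l)*D/(2*m))"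
    using main2 P by (intro mult_left_mono) auto
  have f0: "P * (1 - (\<Sum>i=1..n. a i * b i) / P) = P - (\<Sum>i=1..n. a i * b i)"
    using P by (simp add: field_simps)
  have f1: "P * (l*(1-l)*D/(2*M)) = A / M" by (simp add: AD)
  have f2: "P * (l*(1-l)*D/(2*m)) = A / m" by (simp add: AD)
  have PP: "P = Sa powr (1 / p) * Sb powr (1 / q)" by (simp add: P_def q1 l_def)
  have r1': "A / M \<le> P - (\<Sum>i=1..n. a i * b i)" using r1 f0 f1 by linarith
  have r2': "P - (\<Sum>i=1..n. a i * b i) \<le> A / m" using r2 f0 f2 by linarith
  show ?thesis using r1' r2' unfolding PP by blast
qed

end
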